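(* Let $k,n,k',n'$ be positive integers. If a $(k,n)$ strategy and a $(k',n')$ strategy for the GKS game exist, then a $(kk',nn')$ strategy for the GKS game exists.
   Context: The GKS game with parameter $n$ (a positive integer). A strategy pair $(S,T)$ consists of a function $S$ assigning a bit in $\{0,1\}$ to every sequence $\pi_1\pi_2\ldots\pi_i$ of distinct elements of $[n]=\{1,\dots,n\}$ with $1\le i\le n-1$, and a function $T:\{0,1\}^n\to 2^{[n]}$. For a permutation $\pi=\pi_1\ldots\pi_n$ of $[n]$ and a bit $b$, the final array $A_{\rm final}\in\{0,1\}^n$ is defined by $A_{\rm final}[\pi_i]=S(\pi_1\ldots\pi_i)$ for $1\le i\le n-1$ and $A_{\rm final}[\pi_n]=b$. The pair $(S,T)$ is a $(k,n)$ strategy if for every permutation $\pi$ of $[n]$ and every bit $b$ we have $\pi_n\in T(A_{\rm final})$, and moreover $|T(\sigma)|\le k$ for every $\sigma\in\{0,1\}^n$. *)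

theory Defs
  imports "HOL-Library.FuncSet"
begin

text \<open>A sequence pi_1 ... pi_i of distinct elements of [n]
is a nat list.
An array in {0,1}^n is an extensional function on {1..n}.\<close>

definition is_perm :: "nat \<Rightarrow> nat list \<Rightarrow> bool" where
  "is_perm n \<pi> \<longleftrightarrow> distinct \<pi> \<and> set \<pi> = {1..n}"

text \<open>Final array: A[pi_i] = S(pi_1 ... pi_i) for i \<le> n-1 and A[pi_n] = b.\<close>
definition final_array :: "(nat list \<Rightarrow> bool) \<Rightarrow> nat list \<Rightarrow> bool \<Rightarrow> nat \<Rightarrow> bool" where
  "final_array S \<pi> b = (\<lambda>j. if j \<in> set \<pi> then
      (if j = last \<pi> then b else S (take (Suc (THE i. i < length \<pi> \<and> \<pi> ! i = j)) \<pi>))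
    else undefined)"

definition gks_strategy :: "nat \<Rightarrow> nat \<Rightarrow> (nat list \<Rightarrow> bool) \<Rightarrow> ((nat \<Rightarrow> bool) \<Rightarrow> nat set) \<Rightarrow> bool" where
  "gks_strategy k n S T \<longleftrightarrow>
     (\<forall>\<pi> b. is_perm n \<pi> \<longrightarrow> last \<pi> \<in> T (final_array S \<pi> b)) \<and>
     (\<forall>\<sigma> \<in> {1..n} \<rightarrow>\<^sub>E (UNIV :: bool set). T \<sigma> \<subseteq> {1..n} \<and> card (T \<sigma>) \<le> k)"

end

theory Submission
  imports Defs
begin


lemma final_array_nth:
  assumes "distinct \<pi>" "Suc i < length \<pi>"
  shows "final_array S \<pi> b (\<pi>!i) = S (take (Suc i) \<pi>)"
proof -
  have ne: "\<pi> \<noteq> []" using assms by auto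
  have l: "last \<pi> = \<pi> ! (length \<pi> - 1)" using ne by (simp add: last_conv_nth)
  have "\<pi>!i \<noteq> last \<pi>" using assms l by (simp add: nth_eq_iff_index_eq)
  moreover have "(THE j. j < length \<pi> \<and> \<pi> ! j = \<pi>!i) = i"
    using assms by (intro the_equality) (auto simp: nth_eq_iff_index_eq)
  ultimately show ?thesis using assms unfolding final_array_def by auto
qed

lemma char:
  assumes st: "gks_strategy k n S T" and p: "is_perm n \<pi>" and n: "0 < n"
    and s: "\<sigma> \<in> {1..n} \<rightarrow>\<^sub>E (UNIV::bool set)"
    and h: "\<forall>i. Suc i < length \<pi> \<longrightarrow> \<sigma> (\<pi>!i) = S (take (Suc i) \<pi>)"
  shows "last \<pi> \<in> T \<sigma>"
proof -
  have d: "distinct \<pi>" and sp: "set \<pi> = {1..n}" using p by (auto simp: is_perm_def)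
  have ne: "\<pi> \<noteq> []" using sp n by auto
  have "\<sigma> = final_array S \<pi> (\<sigma> (last \<pi>))"
  proof
    fix j
    show "\<sigma> j = final_array S \<pi> (\<sigma> (last \<pi>)) j"
    proof (cases "j \<in> set \<pi>")
      case True
      show ?thesis
      proof (cases "j = last \<pi>")
        case True thus ?thesis using \<open>j \<in> set \<pi>\<close> by (simp add: final_array_def)
      next
        case False
        obtain i where i: "i < length \<pi>" "\<pi>!i = j" using True by (auto simp: in_set_conv_nth)
        have "i \<noteq> length \<pi> - 1" using False i ne by (auto simp: last_conv_nth)
        hence si: "Suc i < length \<pi>" using i by auto
        show ?thesis using final_array_nth[OF d si] h si i by auto
      qed
    next
      case False
      then show ?thesis using s sp by (auto simp: final_array_def PiE_def extensional_def)
    qed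
  qed
  thus ?thesis using st p unfolding gks_strategy_def by metis
qed

lemma filter_nth_take:
  "j < length (filter P xs) \<Longrightarrow> \<exists>t < length xs. P (xs!t) \<and> filter P xs ! j = xs!t \<and>
     filter P (take (Suc t) xs) = take (Suc j) (filter P xs)"
proof (induction xs arbitrary: j)
  case Nil thus ?case by simp
next
  case (Cons x xs)
  show ?case
  proof (cases "P x")
    case True
    show ?thesis
    proof (cases j)
      case 0 thus ?thesis using True by (intro exI[of _ 0]) auto
    next
      case (Suc j')
      with Cons.prems True have "j' < length (filter P xs)" by auto
      from Cons.IH[OF this] obtain t where "t < length xs" "P (xs!t)" "filter P xs ! j' = xs!t"
        "filter P (take (Suc t) xs) = take (Suc j') (filter P xs)" by blast
      thus ?thesis using True Suc by (intro exI[of _ "Suc t"]) auto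
    qed
  next
    case False
    with Cons.prems have "j < length (filter P xs)" by auto
    from Cons.IH[OF this] obtain t where "t < length xs" "P (xs!t)" "filter P xs ! j = xs!t"
      "filter P (take (Suc t) xs) = take (Suc j) (filter P xs)" by blast
    thus ?thesis using False by (intro exI[of _ "Suc t"]) auto
  qed
qed

definition par :: "bool list \<Rightarrow> bool" where "par bs = odd (length (filter id bs))"

lemma par_snoc: "par (bs @ [x]) = (par bs \<noteq> x)"
  by (cases x) (auto simp: par_def)

definition pfx :: "'a list \<Rightarrow> 'a list list" where
  "pfx p = map (\<lambda>j. take (Suc j) p) [0..<length p]"

lemma pfx_take: "m \<le> length p \<Longrightarrow> pfx (take m p) = take m (pfx p)"
  unfolding pfx_def by (auto simp: take_map min_def intro!: map_cong)

lemma last_filter: "xs \<noteq> [] \<Longrightarrow> P (last xs) \<Longrightarrow> last (filter P xs) = last xs"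
  by (induction xs rule: rev_induct) auto



locale prod_setup =
  fixes n n' k k' :: nat and S1 S2 :: "nat list \<Rightarrow> bool"
    and T1 T2 :: "(nat \<Rightarrow> bool) \<Rightarrow> nat set"
  assumes n_pos: "0 < n" and n'_pos: "0 < n'"
    and st1: "gks_strategy k n S1 T1" and st2: "gks_strategy k' n' S2 T2"
begin

definition blk :: "nat \<Rightarrow> nat" where "blk x = (x - 1) div n + 1"
definition pos :: "nat \<Rightarrow> nat" where "pos x = (x - 1) mod n + 1"
definition emb :: "nat \<Rightarrow> nat \<Rightarrow> nat" where "emb c a = (c - 1) * n + a"

lemma blk_range: "x \<in> {1..n*n'} \<Longrightarrow> blk x \<in> {1..n'}"
proof -
  assume x: "x \<in> {1..n*n'}"
  have "x - 1 < n' * n" using x n_pos by (auto simp: mult.commute)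
  hence "(x - 1) div n < n'" by (rule less_mult_imp_div_less)
  thus ?thesis by (simp add: blk_def)
qed

lemma pos_range: "pos x \<in> {1..n}"
  using n_pos by (simp add: pos_def Suc_leI)

lemma emb_blk_pos: "x \<ge> 1 \<Longrightarrow> emb (blk x) (pos x) = x"
  unfolding emb_def blk_def pos_def by (metis add.assoc add_diff_cancel_right' div_mult_mod_eq le_add_diff_inverse2)

lemma emb_props:
  assumes "c \<in> {1..n'}" "a \<in> {1..n}"
  shows "blk (emb c a) = c" "pos (emb c a) = a" "emb c a \<in> {1..n*n'}"
proof -
  have e: "emb c a - 1 = (a - 1) + (c - 1) * n" using assms by (simp add: emb_def)
  have am: "a - 1 < n" using assms by auto
  have d: "(emb c a - 1) div n = c - 1" unfolding e using am n_pos by simp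
  have m: "(emb c a - 1) mod n = a - 1" unfolding e using am n_pos by simp
  show "blk (emb c a) = c" unfolding blk_def d using assms by simp
  show "pos (emb c a) = a" unfolding pos_def m using assms by simp
  have "(c - 1) * n + a \<le> (c - 1) * n + n" using assms by simp
  also have "\<dots> = c * n" using assms by (cases c) auto
  also have "\<dots> \<le> n' * n" using assms by simp
  finally show "emb c a \<in> {1..n*n'}" using assms by (auto simp: emb_def mult.commute)
qed


definition wb :: "nat \<Rightarrow> nat list \<Rightarrow> nat list" where
  "wb c p = map pos (filter (\<lambda>y. blk y = c) p)"

definition Qp :: "nat list \<Rightarrow> bool" where
  "Qp r \<longleftrightarrow> length (filter (\<lambda>y. blk y = blk (last r)) r) = n"

definition comp :: "nat list \<Rightarrow> nat list" where
  "comp p = map (\<lambda>r. blk (last r)) (filter Qp (pfx p))"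

definition SS :: "nat list \<Rightarrow> bool" where
  "SS p = (let c = blk (last p); q = wb c p in
     if length q < n then S1 q else (S2 (comp p) \<noteq> par (map (\<lambda>j. S1 (take j q)) [1..<n])))"

definition tau :: "(nat \<Rightarrow> bool) \<Rightarrow> nat \<Rightarrow> bool" where
  "tau \<sigma> = restrict (\<lambda>c. odd (card {a\<in>{1..n}. \<sigma> (emb c a)})) {1..n'}"

definition inn :: "(nat \<Rightarrow> bool) \<Rightarrow> nat \<Rightarrow> nat \<Rightarrow> bool" where
  "inn \<sigma> c = restrict (\<lambda>a. \<sigma> (emb c a)) {1..n}"

definition TT :: "(nat \<Rightarrow> bool) \<Rightarrow> nat set" where
  "TT \<sigma> = (\<Union>c \<in> T2 (tau \<sigma>). emb c ` T1 (inn \<sigma> c))"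

lemma len_filter_take_mono:
  "m \<le> m' \<Longrightarrow> length (filter P (take m xs)) \<le> length (filter P (take m' xs))"
proof -
  assume "m \<le> m'"
  hence "take m (take m' xs) = take m xs" by (simp add: min_def)
  hence "take m' xs = take m xs @ drop m (take m' xs)"
    using append_take_drop_id[of m "take m' xs"] by simp
  hence "filter P (take m' xs) = filter P (take m xs) @ filter P (drop m (take m' xs))"
    by (metis filter_append)
  thus ?thesis by simp
qed

context
  fixes \<pi> :: "nat list"
  assumes p: "is_perm (n*n') \<pi>"
begin

lemma dist: "distinct \<pi>" and setp: "set \<pi> = {1..n*n'}"
  using p by (auto simp: is_perm_def)

lemma lenp: "length \<pi> = n * n'"
  using distinct_card[OF dist] setp by simp

lemma nep: "\<pi> \<noteq> []"
  using lenp n_pos n'_pos by auto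

lemma wb_perm:
  assumes c: "c \<in> {1..n'}"
  shows "is_perm n (wb c \<pi>)"
proof -
  have "inj_on pos (set (filter (\<lambda>y. blk y = c) \<pi>))"
  proof (rule inj_onI)
    fix x y assume "x \<in> set (filter (\<lambda>y. blk y = c) \<pi>)" "y \<in> set (filter (\<lambda>y. blk y = c) \<pi>)"
      "pos x = pos y"
    hence "x \<in> set \<pi>" "y \<in> set \<pi>" "blk x = blk y" by auto
    hence "x \<ge> 1" "y \<ge> 1" using setp by auto
    thus "x = y" using emb_blk_pos \<open>pos x = pos y\<close> \<open>blk x = blk y\<close> by metis
  qed
  hence d: "distinct (wb c \<pi>)" using dist by (simp add: wb_def distinct_map)
  have "set (wb c \<pi>) = {1..n}"
  proof
    show "set (wb c \<pi>) \<subseteq> {1..n}" using pos_range by (auto simp: wb_def)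
    show "{1..n} \<subseteq> set (wb c \<pi>)"
    proof
      fix a assume a: "a \<in> {1..n}"
      have "emb c a \<in> set (filter (\<lambda>y. blk y = c) \<pi>)" using emb_props[OF c a] setp by auto
      thus "a \<in> set (wb c \<pi>)" unfolding wb_def using emb_props[OF c a] by (metis image_eqI list.set_map)
    qed
  qed
  thus ?thesis using d by (simp add: is_perm_def)
qed

lemma cnt:
  assumes c: "c \<in> {1..n'}"
  shows "length (filter (\<lambda>y. blk y = c) \<pi>) = n"
proof -
  have "length (wb c \<pi>) = n" using wb_perm[OF c] distinct_card[of "wb c \<pi>"] unfolding is_perm_def by simp
  thus ?thesis by (simp add: wb_def)
qed

lemma inner:
  assumes c: "c \<in> {1..n'}" and j: "Suc j < n"
  shows "final_array SS \<pi> b (emb c (wb c \<pi> ! j)) = S1 (take (Suc j) (wb c \<pi>))"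
proof -
  let ?P = "\<lambda>y. blk y = c"
  have jl: "j < length (filter ?P \<pi>)" using cnt[OF c] j by simp
  obtain t where t: "t < length \<pi>" "?P (\<pi>!t)" "filter ?P \<pi> ! j = \<pi>!t"
    and ft: "filter ?P (take (Suc t) \<pi>) = take (Suc j) (filter ?P \<pi>)"
    using filter_nth_take[OF jl] by blast
  have wj: "wb c \<pi> ! j = pos (\<pi>!t)" using jl t by (simp add: wb_def)
  have mem: "\<pi>!t \<in> {1..n*n'}" using t setp nth_mem by blast
  have ep: "emb c (pos (\<pi>!t)) = \<pi>!t" using emb_blk_pos[of "\<pi>!t"] mem t by auto
  have st: "Suc t < length \<pi>"
  proof (rule ccontr)
    assume "\<not> Suc t < length \<pi>"
    hence "take (Suc t) \<pi> = \<pi>" by simp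
    hence "length (filter ?P \<pi>) = length (take (Suc j) (filter ?P \<pi>))" using ft by simp
    thus False using cnt[OF c] j by simp
  qed
  have tk: "take (Suc t) \<pi> = take t \<pi> @ [\<pi>!t]" using t by (simp add: take_Suc_conv_app_nth)
  have lst: "last (take (Suc t) \<pi>) = \<pi>!t" using tk by simp
  have wbt: "wb c (take (Suc t) \<pi>) = take (Suc j) (wb c \<pi>)" using ft by (simp add: wb_def take_map)
  have lw: "length (take (Suc j) (wb c \<pi>)) < n" using j by simp
  have "final_array SS \<pi> b (\<pi>!t) = SS (take (Suc t) \<pi>)" using final_array_nth[OF dist st] .
  also have "\<dots> = S1 (take (Suc j) (wb c \<pi>))" unfolding SS_def Let_def lst using t(2) wbt lw by simp
  finally show ?thesis using wj ep by simp
qed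

lemma blk_last: "blk (last \<pi>) \<in> {1..n'}"
  using blk_range setp last_in_set[OF nep] by simp

lemma last_wb: "last (wb (blk (last \<pi>)) \<pi>) = pos (last \<pi>)"
proof -
  have "last \<pi> \<in> set (filter (\<lambda>y. blk y = blk (last \<pi>)) \<pi>)" using last_in_set[OF nep] by simp
  hence "filter (\<lambda>y. blk y = blk (last \<pi>)) \<pi> \<noteq> []" by (metis empty_iff empty_set)
  thus ?thesis unfolding wb_def using last_filter[OF nep, of "\<lambda>y. blk y = blk (last \<pi>)"]
    by (simp add: last_map)
qed

end

end


lemma pfx_len[simp]: "length (pfx p) = length p" by (simp add: pfx_def)
lemma pfx_nth[simp]: "t < length p \<Longrightarrow> pfx p ! t = take (Suc t) p" by (simp add: pfx_def)
lemma pfx_set: "r \<in> set (pfx p) \<longleftrightarrow> (\<exists>t < length p. r = take (Suc t) p)"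
  by (auto simp: pfx_def)
lemma pfx_distinct: "distinct (pfx p)"
  unfolding distinct_conv_nth
proof (intro allI impI)
  fix i j assume "i < length (pfx p)" "j < length (pfx p)" "i \<noteq> j"
  then have "length (pfx p ! i) \<noteq> length (pfx p ! j)" by simp
  thus "pfx p ! i \<noteq> pfx p ! j" by auto
qed

context prod_setup begin

context
  fixes \<pi> :: "nat list"
  assumes p: "is_perm (n*n') \<pi>"
begin

lemma inj_comp: "inj_on (\<lambda>r. blk (last r)) (set (filter Qp (pfx \<pi>)))"
proof (rule inj_onI)
  have key: False if lt: "t1 < t2" "t2 < length \<pi>" and q1: "Qp (take (Suc t1) \<pi>)" and q2: "Qp (take (Suc t2) \<pi>)"
    and eq: "blk (last (take (Suc t1) \<pi>)) = blk (last (take (Suc t2) \<pi>))" for t1 t2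
  proof -
    have l1: "last (take (Suc t1) \<pi>) = \<pi>!t1" using lt by (simp add: take_Suc_conv_app_nth)
    have tk2: "take (Suc t2) \<pi> = take t2 \<pi> @ [\<pi>!t2]" using lt by (simp add: take_Suc_conv_app_nth)
    let ?c = "blk (\<pi>!t2)"
    let ?P = "\<lambda>y. blk y = ?c"
    have c1: "length (filter ?P (take (Suc t1) \<pi>)) = n" using q1 eq l1 tk2 by (simp add: Qp_def)
    have "length (filter ?P (take (Suc t1) \<pi>)) \<le> length (filter ?P (take t2 \<pi>))"
      using lt by (intro len_filter_take_mono) simp
    hence "n + 1 \<le> length (filter ?P (take (Suc t2) \<pi>))" using c1 tk2 by simp
    also have "\<dots> \<le> length (filter ?P (take (length \<pi>) \<pi>))"
      using lt by (intro len_filter_take_mono) simp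
    also have "\<dots> = n"
    proof -
      have "\<pi>!t2 \<in> set \<pi>" using lt by simp
      hence "?c \<in> {1..n'}" using blk_range setp[OF p] by simp
      thus ?thesis using cnt[OF p] by simp
    qed
    finally show False by simp
  qed
  fix r1 r2 assume "r1 \<in> set (filter Qp (pfx \<pi>))" "r2 \<in> set (filter Qp (pfx \<pi>))"
    and e: "blk (last r1) = blk (last r2)"
  then obtain t1 t2 where t: "t1 < length \<pi>" "t2 < length \<pi>" "r1 = take (Suc t1) \<pi>" "r2 = take (Suc t2) \<pi>"
    "Qp r1" "Qp r2" by (auto simp: pfx_set)
  show "r1 = r2"
  proof (cases t1 t2 rule: linorder_cases)
    case less thus ?thesis using key[of t1 t2] t e by auto
  next
    case greater thus ?thesis using key[of t2 t1] t e by auto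
  qed (use t in auto)
qed

lemma rho_perm: "is_perm n' (comp \<pi>)"
proof -
  have d: "distinct (comp \<pi>)" unfolding comp_def
    using inj_comp distinct_filter[OF pfx_distinct] by (simp add: distinct_map)
  have "set (comp \<pi>) = {1..n'}"
  proof
    show "set (comp \<pi>) \<subseteq> {1..n'}"
    proof
      fix c assume "c \<in> set (comp \<pi>)"
      then obtain t where "t < length \<pi>" "c = blk (last (take (Suc t) \<pi>))"
        unfolding comp_def by (auto simp: pfx_set)
      moreover have "\<pi>!t \<in> set \<pi>" using \<open>t < length \<pi>\<close> by simp
      ultimately show "c \<in> {1..n'}" using blk_range setp[OF p] by (simp add: take_Suc_conv_app_nth)
    qed
    show "{1..n'} \<subseteq> set (comp \<pi>)"
    proof
      fix c assume c: "c \<in> {1..n'}"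
      let ?P = "\<lambda>y. blk y = c"
      have jl: "n - 1 < length (filter ?P \<pi>)" using cnt[OF p c] n_pos by simp
      obtain t where t: "t < length \<pi>" "?P (\<pi>!t)"
        and ft: "filter ?P (take (Suc t) \<pi>) = take (Suc (n-1)) (filter ?P \<pi>)"
        using filter_nth_take[OF jl] by blast
      have l: "last (take (Suc t) \<pi>) = \<pi>!t" using t by (simp add: take_Suc_conv_app_nth)
      have "Qp (take (Suc t) \<pi>)" unfolding Qp_def l using t ft cnt[OF p c] n_pos by simp
      moreover have "take (Suc t) \<pi> \<in> set (pfx \<pi>)" using t by (auto simp: pfx_set)
      ultimately have "take (Suc t) \<pi> \<in> set (filter Qp (pfx \<pi>))" by simp
      hence "blk (last (take (Suc t) \<pi>)) \<in> set (comp \<pi>)" unfolding comp_def by simp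
      thus "c \<in> set (comp \<pi>)" using l t by simp
    qed
  qed
  thus ?thesis using d by (simp add: is_perm_def)
qed

lemma rho_len: "length (comp \<pi>) = n'"
  using rho_perm distinct_card[of "comp \<pi>"] by (simp add: is_perm_def)

lemma rho_last: "last (comp \<pi>) = blk (last \<pi>)"
proof -
  have ne: "pfx \<pi> \<noteq> []" using nep[OF p] by (simp add: pfx_def)
  have lp: "last (pfx \<pi>) = \<pi>" using ne nep[OF p] by (simp add: last_conv_nth)
  have "Qp \<pi>" unfolding Qp_def using cnt[OF p blk_last[OF p]] .
  hence "last (filter Qp (pfx \<pi>)) = \<pi>" using last_filter[OF ne, of Qp] lp by simp
  moreover have "\<pi> \<in> set (filter Qp (pfx \<pi>))" using \<open>Qp \<pi>\<close> last_in_set[OF ne] lp by simp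
  hence "filter Qp (pfx \<pi>) \<noteq> []" by (metis empty_iff empty_set)
  ultimately show ?thesis unfolding comp_def by (simp add: last_map)
qed

end
end


context prod_setup begin

context
  fixes \<pi> :: "nat list"
  assumes p: "is_perm (n*n') \<pi>"
begin

lemma outer:
  assumes i: "Suc i < n'"
  shows "tau (final_array SS \<pi> b) (comp \<pi> ! i) = S2 (take (Suc i) (comp \<pi>))"
proof -
  let ?A = "final_array SS \<pi> b"
  define F where "F = filter Qp (pfx \<pi>)"
  have rF: "comp \<pi> = map (\<lambda>r. blk (last r)) F" by (simp add: comp_def F_def)
  have lF: "length F = n'" using rho_len[OF p] rF by simp
  have il: "i < length (filter Qp (pfx \<pi>))" using lF i F_def by simp
  obtain t where t: "t < length \<pi>" "Qp (pfx \<pi> ! t)" "F ! i = pfx \<pi> ! t"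
    and ft: "filter Qp (take (Suc t) (pfx \<pi>)) = take (Suc i) F"
    using filter_nth_take[OF il] unfolding F_def by auto
  define r where "r = take (Suc t) \<pi>"
  have pr: "pfx \<pi> ! t = r" using t by (simp add: r_def)
  have lr: "last r = \<pi>!t" using t by (simp add: r_def take_Suc_conv_app_nth)
  define c where "c = blk (\<pi>!t)"
  have memt: "\<pi>!t \<in> set \<pi>" using t by simp
  have c: "c \<in> {1..n'}" using blk_range setp[OF p] memt c_def by simp
  have "comp \<pi> ! i = blk (last (F!i))" using rF i lF by simp
  hence ri: "comp \<pi> ! i = c" using t(3) pr lr c_def by simp
  have st: "Suc t < length \<pi>"
  proof (rule ccontr)
    assume "\<not> Suc t < length \<pi>"
    hence "take (Suc t) (pfx \<pi>) = pfx \<pi>" by simp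
    hence "F = take (Suc i) F" using ft F_def by simp
    hence "length F = length (take (Suc i) F)" by (rule arg_cong)
    hence "length F = Suc i" using lF i by simp
    thus False using lF i by simp
  qed
  have cr: "comp r = take (Suc i) (comp \<pi>)"
  proof -
    have "pfx r = take (Suc t) (pfx \<pi>)" unfolding r_def using st by (intro pfx_take) simp
    thus ?thesis unfolding comp_def using ft F_def by (simp add: take_map)
  qed
  let ?P = "\<lambda>y. blk y = c"
  have Qr: "length (filter ?P r) = n" using t(2) pr lr c_def by (simp add: Qp_def)
  have fr: "filter ?P r = filter ?P \<pi>"
  proof -
    have "\<pi> = r @ drop (Suc t) \<pi>" by (simp add: r_def)
    hence "filter ?P \<pi> = filter ?P r @ filter ?P (drop (Suc t) \<pi>)" by (metis filter_append)
    moreover have "length (filter ?P \<pi>) = n" using cnt[OF p c] .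
    ultimately show ?thesis using Qr by simp
  qed
  define q where "q = wb c \<pi>"
  have wr: "wb c r = q" using fr by (simp add: wb_def q_def)
  have lq: "length q = n" using Qr fr by (simp add: q_def wb_def)
  have qperm: "is_perm n q" using wb_perm[OF p c] q_def by simp
  have qne: "q \<noteq> []" using lq n_pos by auto
  have lastq: "last q = pos (\<pi>!t)"
  proof -
    have ne: "r \<noteq> []" using r_def nep[OF p] by simp
    have "last (filter ?P r) = \<pi>!t" using last_filter[OF ne, of ?P] lr c_def by simp
    moreover have "filter ?P r \<noteq> []" using Qr n_pos by auto
    ultimately show ?thesis using wr unfolding wb_def by (metis last_map)
  qed
  have memN: "\<pi>!t \<in> {1..n*n'}" using memt setp[OF p] by simp
  have embl: "emb c (last q) = \<pi>!t" using lastq emb_blk_pos[of "\<pi>!t"] memN c_def by simp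
  have At: "?A (\<pi>!t) = (S2 (take (Suc i) (comp \<pi>)) \<noteq> par (map (\<lambda>j. S1 (take j q)) [1..<n]))"
  proof -
    show ?thesis using final_array_nth[OF dist[OF p] st] unfolding r_def[symmetric] SS_def Let_def
      using lr c_def wr lq cr by simp
  qed
  have bl: "map (\<lambda>a. ?A (emb c a)) (butlast q) = map (\<lambda>j. S1 (take j q)) [1..<n]"
  proof (rule nth_equalityI)
    show "length (map (\<lambda>a. ?A (emb c a)) (butlast q)) = length (map (\<lambda>j. S1 (take j q)) [1..<n])"
      using lq by simp
    fix j assume "j < length (map (\<lambda>a. ?A (emb c a)) (butlast q))"
    hence j: "Suc j < n" using lq by simp
    have "butlast q ! j = q ! j" using j lq by (simp add: nth_butlast)
    moreover have "[1..<n] ! j = Suc j" using j by simp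
    ultimately show "map (\<lambda>a. ?A (emb c a)) (butlast q) ! j = map (\<lambda>j. S1 (take j q)) [1..<n] ! j"
      using inner[OF p c j, of b] j lq q_def by simp
  qed
  have qsplit: "q = butlast q @ [last q]" using qne by simp
  define f where "f = (\<lambda>a. ?A (emb c a))"
  have sq: "set q = {1..n}" and dq: "distinct q" using qperm by (auto simp: is_perm_def)
  have "set (filter f q) = {a\<in>{1..n}. f a}" using sq by simp
  moreover have "card (set (filter f q)) = length (filter f q)"
    using dq by (intro distinct_card) simp
  ultimately have "card {a\<in>{1..n}. f a} = length (filter f q)" by simp
  hence "odd (card {a\<in>{1..n}. f a}) = par (map f q)"
    by (simp add: par_def filter_map o_def)
  also have "map f q = map f (butlast q) @ [f (last q)]"
    using arg_cong[OF qsplit, of "map f"] by simp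
  also have "par (map f (butlast q) @ [f (last q)]) = S2 (take (Suc i) (comp \<pi>))"
    unfolding par_snoc f_def bl embl At by auto
  finally have "odd (card {a\<in>{1..n}. ?A (emb c a)}) = S2 (take (Suc i) (comp \<pi>))" by (simp add: f_def)
  thus ?thesis using ri c by (simp add: tau_def)
qed

end
end


context prod_setup begin

lemma restrict_PiE_UNIV: "restrict f A \<in> A \<rightarrow>\<^sub>E (UNIV :: bool set)"
  by auto

lemma win:
  assumes p: "is_perm (n*n') \<pi>"
  shows "last \<pi> \<in> TT (final_array SS \<pi> b)"
proof -
  let ?A = "final_array SS \<pi> b"
  define e where "e = last \<pi>"
  define cs where "cs = blk e"
  have cs: "cs \<in> {1..n'}" using blk_last[OF p] by (simp add: cs_def e_def)
  have eN: "e \<in> {1..n*n'}" using last_in_set[OF nep[OF p]] setp[OF p] e_def by simp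
  have "last (comp \<pi>) \<in> T2 (tau ?A)"
  proof (rule char[OF st2 rho_perm[OF p] n'_pos])
    show "tau ?A \<in> {1..n'} \<rightarrow>\<^sub>E UNIV" unfolding tau_def by (rule restrict_PiE_UNIV)
    show "\<forall>i. Suc i < length (comp \<pi>) \<longrightarrow> tau ?A (comp \<pi> ! i) = S2 (take (Suc i) (comp \<pi>))"
      using outer[OF p] rho_len[OF p] by simp
  qed
  hence c1: "cs \<in> T2 (tau ?A)" using rho_last[OF p] cs_def e_def by simp
  have "last (wb cs \<pi>) \<in> T1 (inn ?A cs)"
  proof (rule char[OF st1 wb_perm[OF p cs] n_pos])
    show "inn ?A cs \<in> {1..n} \<rightarrow>\<^sub>E UNIV" unfolding inn_def by (rule restrict_PiE_UNIV)
    show "\<forall>j. Suc j < length (wb cs \<pi>) \<longrightarrow> inn ?A cs (wb cs \<pi> ! j) = S1 (take (Suc j) (wb cs \<pi>))"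
    proof (intro allI impI)
      fix j assume j: "Suc j < length (wb cs \<pi>)"
      have lw: "length (wb cs \<pi>) = n" using cnt[OF p cs] by (simp add: wb_def)
      have "wb cs \<pi> ! j \<in> {1..n}" using j wb_perm[OF p cs] nth_mem[of j "wb cs \<pi>"]
        by (simp add: is_perm_def)
      thus "inn ?A cs (wb cs \<pi> ! j) = S1 (take (Suc j) (wb cs \<pi>))"
        using inner[OF p cs, of j b] j lw by (simp add: inn_def)
    qed
  qed
  hence "pos e \<in> T1 (inn ?A cs)" using last_wb[OF p] cs_def e_def by simp
  hence "emb cs (pos e) \<in> TT ?A" using c1 unfolding TT_def by blast
  thus ?thesis using emb_blk_pos[of e] eN cs_def e_def by simp
qed

lemma prod_strategy: "gks_strategy (k*k') (n*n') SS TT"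
  unfolding gks_strategy_def
proof (rule conjI; intro allI impI ballI)
  fix \<pi> b assume "is_perm (n*n') \<pi>"
  thus "last \<pi> \<in> TT (final_array SS \<pi> b)" by (rule win)
next
  fix \<sigma> :: "nat \<Rightarrow> bool" assume "\<sigma> \<in> {1..n*n'} \<rightarrow>\<^sub>E UNIV"
  show "TT \<sigma> \<subseteq> {1..n*n'} \<and> card (TT \<sigma>) \<le> k * k'"
  proof
  have B2: "\<forall>\<sigma> \<in> {1..n'} \<rightarrow>\<^sub>E (UNIV :: bool set). T2 \<sigma> \<subseteq> {1..n'} \<and> card (T2 \<sigma>) \<le> k'"
    using st2 unfolding gks_strategy_def by (rule conjunct2)
  have B1: "\<forall>\<sigma> \<in> {1..n} \<rightarrow>\<^sub>E (UNIV :: bool set). T1 \<sigma> \<subseteq> {1..n} \<and> card (T1 \<sigma>) \<le> k"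
    using st1 unfolding gks_strategy_def by (rule conjunct2)
  have "tau \<sigma> \<in> {1..n'} \<rightarrow>\<^sub>E (UNIV :: bool set)" unfolding tau_def by (rule restrict_PiE_UNIV)
  with B2 have t2: "T2 (tau \<sigma>) \<subseteq> {1..n'}" "card (T2 (tau \<sigma>)) \<le> k'" by auto
  have t1: "T1 (inn \<sigma> c) \<subseteq> {1..n}" "card (T1 (inn \<sigma> c)) \<le> k" for c
  proof -
    have "inn \<sigma> c \<in> {1..n} \<rightarrow>\<^sub>E (UNIV :: bool set)" unfolding inn_def by (rule restrict_PiE_UNIV)
    with B1 show "T1 (inn \<sigma> c) \<subseteq> {1..n}" "card (T1 (inn \<sigma> c)) \<le> k" by auto
  qed
  show "TT \<sigma> \<subseteq> {1..n*n'}"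
  proof
    fix x assume "x \<in> TT \<sigma>"
    then obtain c a where ca: "c \<in> T2 (tau \<sigma>)" "a \<in> T1 (inn \<sigma> c)" "x = emb c a"
      unfolding TT_def by blast
    hence "c \<in> {1..n'}" "a \<in> {1..n}" "x = emb c a" using subsetD[OF t1(1)[of c]] subsetD[OF t2(1)] by auto
    thus "x \<in> {1..n*n'}" using emb_props(3) by simp
  qed
  have fin: "finite (T2 (tau \<sigma>))" using t2 finite_subset by blast
  have "card (TT \<sigma>) \<le> (\<Sum>c\<in>T2 (tau \<sigma>). card (emb c ` T1 (inn \<sigma> c)))"
    unfolding TT_def using fin by (rule card_UN_le)
  also have "\<dots> \<le> (\<Sum>c\<in>T2 (tau \<sigma>). k)"
  proof (rule sum_mono)
    fix c
    have "finite (T1 (inn \<sigma> c))" using t1(1) by (rule finite_subset) simp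
    hence "card (emb c ` T1 (inn \<sigma> c)) \<le> card (T1 (inn \<sigma> c))" by (rule card_image_le)
    thus "card (emb c ` T1 (inn \<sigma> c)) \<le> k" using t1(2)[of c] by linarith
  qed
  also have "\<dots> = card (T2 (tau \<sigma>)) * k" by simp
  also have "\<dots> \<le> k' * k" using t2(2) by (rule mult_right_mono) simp
  finally show "card (TT \<sigma>) \<le> k * k'" by (simp add: mult.commute)
  qed
qed

end

theorem lemma1:
  fixes k n k' n' :: nat
  assumes "0 < k" "0 < n" "0 < k'" "0 < n'"
    and "\<exists>S T. gks_strategy k n S T"
    and "\<exists>S T. gks_strategy k' n' S T"
  shows "\<exists>S T. gks_strategy (k * k') (n * n') S T"
proof -
  obtain S1 T1 where 1: "gks_strategy k n S1 T1" using assms(5) by blast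
  obtain S2 T2 where 2: "gks_strategy k' n' S2 T2" using assms(6) by blast
  have P: "prod_setup n n' k k' S1 S2 T1 T2"
    using 1 2 assms by (simp add: prod_setup_def)
  show ?thesis using prod_setup.prod_strategy[OF P] by blast
qed


end
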